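(* Let $\vec{\mathcal G}=([n],E)$ be an ergodic graph of a deterministic two-player mean-payoff game, suppose $r\in\mathcal P^{\sigma,\tau}$ for some $(\sigma,\tau)\in\Xi$, and let $\gamma$ satisfy $1>\gamma>1-\frac{1}{6n^2\Delta(r)}$. Then $(\sigma,\tau)$ is the unique pair of optimal policies in the discounted game with weights $r$ and discount factor $\gamma$. Consequently the Blackwell threshold satisfies $\gamma^*\le 1-\frac{1}{6n^2\Delta(r)}$.
   Context: Setting: directed graph $\vec{\mathcal G}=([n],E)$ without multiple edges, each vertex having an outgoing edge, $[n]=V_{\max}\uplus V_{\min}$, weights $r\in\mathbb R^E$. Ergodic equation in $(\lambda,u)$: $\lambda+u_i=\max_{(i,j)\in E}\{r_{ij}+u_j\}$ ($i\in V_{\max}$), $\lambda+u_i=\min_{(i,j)\in E}\{r_{ij}+u_j\}$ ($i\in V_{\min}$); $u$ is a bias if $(\lambda,u)$ solves it; ergodic graph: solvable for every $r$; $\lambda$ is the mean-payoff value. Policies $\sigma:V_{\max}\to[n]$, $\tau:V_{\min}\to[n]$ choose outgoing edges; a pair is bias-induced if some bias makes each chosen edge attain the max/min. $\Xi$: pairs whose induced subgraph has exactly one directed cycle; $\mathcal P^{\sigma,\tau}$: set of $r$ for which $(\sigma,\tau)$ is the only bias-induced pair. Condition number: $\Delta(r)=\dfrac{\max\{|r_{ij}-\lambda|:(i,j)\in E\}}{\min\{|r_{ij}-\lambda+u_j-u_i|:(i,j)\in E,\ r_{ij}-\lambda+u_j-u_i\ne0\}}$ ($\Delta=1$ if the denominator's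 set is empty). Discounted game with factor $\gamma\in(0,1)$: along play $i_0,i_1,\dots$ Max receives $(1-\gamma)\sum_{t\ge0}\gamma^t r_{i_ti_{t+1}}$; its value $\lambda^{(\gamma)}\in\mathbb R^n$ is the unique solution of $\lambda^{(\gamma)}_i=\max_{(i,j)\in E}\{(1-\gamma)r_{ij}+\gamma\lambda^{(\gamma)}_j\}$ ($i\in V_{\max}$), $\lambda^{(\gamma)}_i=\min_{(i,j)\in E}\{(1-\gamma)r_{ij}+\gamma\lambda^{(\gamma)}_j\}$ ($i\in V_{\min}$); a policy is optimal iff it uses edges attaining these maxima (resp. minima). The Blackwell threshold $\gamma^*$ is the smallest $\gamma^*\in(0,1)$ such that any policy optimal for some $\gamma\in(\gamma^*,1)$ is optimal for all $\gamma\in(\gamma^*,1)$. *)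

theory Defs
  imports Complex_Main
begin

text \<open>Vertices are 0,...,n-1 (i.e. [n]); E is the edge set; Vmax are the vertices of Max,
  Vmin = [n] - Vmax those of Min; weights r are a function on pairs (only values on E matter).\<close>

definition game_graph :: "nat \<Rightarrow> (nat \<times> nat) set \<Rightarrow> nat set \<Rightarrow> bool" where
  "game_graph n E Vmax \<longleftrightarrow> E \<subseteq> {..<n} \<times> {..<n} \<and> (\<forall>i<n. \<exists>j. (i, j) \<in> E) \<and> Vmax \<subseteq> {..<n}"

definition Vmin :: "nat \<Rightarrow> nat set \<Rightarrow> nat set" where
  "Vmin n Vmax = {..<n} - Vmax"

definition succs :: "(nat \<times> nat) set \<Rightarrow> nat \<Rightarrow> nat set" where
  "succs E i = {j. (i, j) \<in> E}"

definition solves_ergodic ::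
  "nat \<Rightarrow> (nat \<times> nat) set \<Rightarrow> nat set \<Rightarrow> (nat \<Rightarrow> nat \<Rightarrow> real) \<Rightarrow> real \<Rightarrow> (nat \<Rightarrow> real) \<Rightarrow> bool" where
  "solves_ergodic n E Vmax r lam u \<longleftrightarrow>
     (\<forall>i\<in>Vmax. lam + u i = Max ((\<lambda>j. r i j + u j) ` succs E i)) \<and>
     (\<forall>i\<in>Vmin n Vmax. lam + u i = Min ((\<lambda>j. r i j + u j) ` succs E i))"

definition is_bias ::
  "nat \<Rightarrow> (nat \<times> nat) set \<Rightarrow> nat set \<Rightarrow> (nat \<Rightarrow> nat \<Rightarrow> real) \<Rightarrow> (nat \<Rightarrow> real) \<Rightarrow> bool" where
  "is_bias n E Vmax r u \<longleftrightarrow> (\<exists>lam. solves_ergodic n E Vmax r lam u)"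

definition ergodic_graph :: "nat \<Rightarrow> (nat \<times> nat) set \<Rightarrow> nat set \<Rightarrow> bool" where
  "ergodic_graph n E Vmax \<longleftrightarrow> (\<forall>r. \<exists>lam u. solves_ergodic n E Vmax r lam u)"

text \<open>Policies: sigma chooses an outgoing edge at each Max vertex, tau at each Min vertex.
  Only their values on Vmax resp. Vmin matter.\<close>
definition is_policy_pair ::
  "nat \<Rightarrow> (nat \<times> nat) set \<Rightarrow> nat set \<Rightarrow> (nat \<Rightarrow> nat) \<Rightarrow> (nat \<Rightarrow> nat) \<Rightarrow> bool" where
  "is_policy_pair n E Vmax \<sigma> \<tau> \<longleftrightarrow>
     (\<forall>i\<in>Vmax. (i, \<sigma> i) \<in> E) \<and> (\<forall>i\<in>Vmin n Vmax. (i, \<tau> i) \<in> E)"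

definition same_pair ::
  "nat \<Rightarrow> nat set \<Rightarrow> (nat \<Rightarrow> nat) \<Rightarrow> (nat \<Rightarrow> nat) \<Rightarrow> (nat \<Rightarrow> nat) \<Rightarrow> (nat \<Rightarrow> nat) \<Rightarrow> bool" where
  "same_pair n Vmax \<sigma> \<tau> \<sigma>' \<tau>' \<longleftrightarrow> (\<forall>i\<in>Vmax. \<sigma>' i = \<sigma> i) \<and> (\<forall>i\<in>Vmin n Vmax. \<tau>' i = \<tau> i)"

definition bias_induced ::
  "nat \<Rightarrow> (nat \<times> nat) set \<Rightarrow> nat set \<Rightarrow> (nat \<Rightarrow> nat \<Rightarrow> real) \<Rightarrow> (nat \<Rightarrow> nat) \<Rightarrow> (nat \<Rightarrow> nat) \<Rightarrow> bool" where
  "bias_induced n E Vmax r \<sigma> \<tau> \<longleftrightarrow> is_policy_pair n E Vmax \<sigma> \<tau> \<and>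
     (\<exists>lam u. solves_ergodic n E Vmax r lam u \<and>
        (\<forall>i\<in>Vmax. lam + u i = r i (\<sigma> i) + u (\<sigma> i)) \<and>
        (\<forall>i\<in>Vmin n Vmax. lam + u i = r i (\<tau> i) + u (\<tau> i)))"

definition policy_edges ::
  "nat \<Rightarrow> nat set \<Rightarrow> (nat \<Rightarrow> nat) \<Rightarrow> (nat \<Rightarrow> nat) \<Rightarrow> (nat \<times> nat) set" where
  "policy_edges n Vmax \<sigma> \<tau> = {(i, \<sigma> i) | i. i \<in> Vmax} \<union> {(i, \<tau> i) | i. i \<in> Vmin n Vmax}"

text \<open>Directed cycles of a graph with edge set F, represented by their (nonempty) vertex sets;
  for the functional graphs induced by policy pairs a cycle is determined by its vertex set.\<close>
definition cycles :: "(nat \<times> nat) set \<Rightarrow> nat set set" where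
  "cycles F = {set vs | vs. vs \<noteq> [] \<and> distinct vs \<and>
      (\<forall>k<length vs. (vs ! k, vs ! ((k + 1) mod length vs)) \<in> F)}"

definition Xi :: "nat \<Rightarrow> (nat \<times> nat) set \<Rightarrow> nat set \<Rightarrow> (nat \<Rightarrow> nat) \<Rightarrow> (nat \<Rightarrow> nat) \<Rightarrow> bool" where
  "Xi n E Vmax \<sigma> \<tau> \<longleftrightarrow> is_policy_pair n E Vmax \<sigma> \<tau> \<and> card (cycles (policy_edges n Vmax \<sigma> \<tau>)) = 1"

definition P_set ::
  "nat \<Rightarrow> (nat \<times> nat) set \<Rightarrow> nat set \<Rightarrow> (nat \<Rightarrow> nat) \<Rightarrow> (nat \<Rightarrow> nat) \<Rightarrow> (nat \<Rightarrow> nat \<Rightarrow> real) set" where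
  "P_set n E Vmax \<sigma> \<tau> = {r. bias_induced n E Vmax r \<sigma> \<tau> \<and>
      (\<forall>\<sigma>' \<tau>'. bias_induced n E Vmax r \<sigma>' \<tau>' \<longrightarrow> same_pair n Vmax \<sigma> \<tau> \<sigma>' \<tau>')}"

definition cond_num ::
  "(nat \<times> nat) set \<Rightarrow> (nat \<Rightarrow> nat \<Rightarrow> real) \<Rightarrow> real \<Rightarrow> (nat \<Rightarrow> real) \<Rightarrow> real" where
  "cond_num E r lam u =
     (let D = {\<bar>r i j - lam + u j - u i\<bar> | i j. (i, j) \<in> E \<and> r i j - lam + u j - u i \<noteq> 0}
      in if D = {} then 1
         else Max {\<bar>r i j - lam\<bar> | i j. (i, j) \<in> E} / Min D)"

definition is_disc_value ::
  "nat \<Rightarrow> (nat \<times> nat) set \<Rightarrow> nat set \<Rightarrow> (nat \<Rightarrow> nat \<Rightarrow> real) \<Rightarrow> real \<Rightarrow> (nat \<Rightarrow> real) \<Rightarrow> bool" where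
  "is_disc_value n E Vmax r \<gamma> v \<longleftrightarrow>
     (\<forall>i\<in>Vmax. v i = Max ((\<lambda>j. (1 - \<gamma>) * r i j + \<gamma> * v j) ` succs E i)) \<and>
     (\<forall>i\<in>Vmin n Vmax. v i = Min ((\<lambda>j. (1 - \<gamma>) * r i j + \<gamma> * v j) ` succs E i))"

definition disc_optimal ::
  "nat \<Rightarrow> (nat \<times> nat) set \<Rightarrow> nat set \<Rightarrow> (nat \<Rightarrow> nat \<Rightarrow> real) \<Rightarrow> real \<Rightarrow> (nat \<Rightarrow> nat) \<Rightarrow> (nat \<Rightarrow> nat) \<Rightarrow> bool" where
  "disc_optimal n E Vmax r \<gamma> \<sigma> \<tau> \<longleftrightarrow> is_policy_pair n E Vmax \<sigma> \<tau> \<and>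
     (\<exists>v. is_disc_value n E Vmax r \<gamma> v \<and>
        (\<forall>i\<in>Vmax. v i = (1 - \<gamma>) * r i (\<sigma> i) + \<gamma> * v (\<sigma> i)) \<and>
        (\<forall>i\<in>Vmin n Vmax. v i = (1 - \<gamma>) * r i (\<tau> i) + \<gamma> * v (\<tau> i)))"

definition blackwell_prop ::
  "nat \<Rightarrow> (nat \<times> nat) set \<Rightarrow> nat set \<Rightarrow> (nat \<Rightarrow> nat \<Rightarrow> real) \<Rightarrow> real \<Rightarrow> bool" where
  "blackwell_prop n E Vmax r g \<longleftrightarrow>
     (\<forall>\<sigma> \<tau>. (\<exists>\<gamma>. g < \<gamma> \<and> \<gamma> < 1 \<and> disc_optimal n E Vmax r \<gamma> \<sigma> \<tau>) \<longrightarrow>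
        (\<forall>\<gamma>. g < \<gamma> \<and> \<gamma> < 1 \<longrightarrow> disc_optimal n E Vmax r \<gamma> \<sigma> \<tau>))"

definition is_blackwell_threshold ::
  "nat \<Rightarrow> (nat \<times> nat) set \<Rightarrow> nat set \<Rightarrow> (nat \<Rightarrow> nat \<Rightarrow> real) \<Rightarrow> real \<Rightarrow> bool" where
  "is_blackwell_threshold n E Vmax r g \<longleftrightarrow> 0 < g \<and> g < 1 \<and> blackwell_prop n E Vmax r g \<and>
     (\<forall>g'. 0 < g' \<and> g' < 1 \<and> blackwell_prop n E Vmax r g' \<longrightarrow> g \<le> g')"

end

theory Submission
  imports Defs
begin


lemma geo_series:
  fixes a :: "nat \<Rightarrow> real"
  assumes "0 \<le> g" "g < 1" "\<And>s. \<bar>a s\<bar> \<le> C"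
  shows "summable (\<lambda>s. g^s * a s)" "\<bar>\<Sum>s. g^s * a s\<bar> \<le> C / (1 - g)"
proof -
  have sg: "summable (\<lambda>s. C * g^s)" using assms by (intro summable_mult summable_geometric) simp
  have le: "\<bar>g^s * a s\<bar> \<le> C * g^s" for s
    using assms(1) assms(3)[of s] by (simp add: abs_mult mult.commute mult_right_mono)
  have sa: "summable (\<lambda>s. \<bar>g^s * a s\<bar>)"
    by (rule summable_rabs_comparison_test[OF _ sg]) (use le in auto)
  then show "summable (\<lambda>s. g^s * a s)" by (rule summable_rabs_cancel)
  have "\<bar>\<Sum>s. g^s * a s\<bar> \<le> (\<Sum>s. \<bar>g^s * a s\<bar>)" by (rule summable_rabs[OF sa])
  also have "\<dots> \<le> (\<Sum>s. C * g^s)" by (rule suminf_le[OF le sa sg])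
  also have "\<dots> = C / (1 - g)" using assms by (simp add: suminf_mult suminf_geometric summable_geometric)
  finally show "\<bar>\<Sum>s. g^s * a s\<bar> \<le> C / (1 - g)" .
qed

lemma funpow_in:
  assumes "\<forall>i<n. f i < n" "x < n" shows "(f^^k) x < n"
  using assms by (induction k) auto

lemma telescope:
  fixes a :: "nat \<Rightarrow> real"
  assumes "\<forall>i<n. f i < n" "\<forall>x<n. \<bar>a x - a (f x)\<bar> \<le> B" "x < n"
  shows "\<bar>a x - a ((f^^k) x)\<bar> \<le> real k * B"
proof (induction k)
  case 0 then show ?case by simp
next
  case (Suc k)
  have "(f^^k) x < n" using funpow_in assms by blast
  then have "\<bar>a ((f^^k) x) - a (f ((f^^k) x))\<bar> \<le> B" using assms(2) by blast
  then show ?case using Suc by (simp add: algebra_simps)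
qed

lemma core:
  fixes f :: "nat \<Rightarrow> nat" and w :: "nat \<Rightarrow> real"
  assumes fm: "\<forall>i<n. f i < n" and c0: "c0 < n"
    and reach: "\<forall>j<n. \<exists>k<n. (f^^k) j = c0"
    and wb: "\<forall>x<n. \<bar>w x\<bar> \<le> W"
    and g: "0 \<le> g" "g < 1"
  shows "\<exists>G. (\<forall>x<n. G x = w x + g * G (f x)) \<and> (\<forall>x<n. \<forall>y<n. \<bar>G x - G y\<bar> \<le> 4 * (real n - 1) * W)"
proof -
  define G where "G x = (\<Sum>s. g^s * w ((f^^s) x))" for x
  have W0: "0 \<le> W" using wb c0 by force
  have ab: "\<bar>w ((f^^s) x)\<bar> \<le> W" if "x < n" for x s using wb funpow_in[OF fm that] by blast
  have sm: "summable (\<lambda>s. g^s * w ((f^^s) x))" and Gb: "\<bar>G x\<bar> \<le> W / (1 - g)" if "x < n" for x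
    using geo_series[OF g, of "\<lambda>s. w ((f^^s) x)" W] ab[OF that] G_def by auto
  have rec: "G x = w x + g * G (f x)" if "x < n" for x
  proof -
    have "(\<Sum>s. g^Suc s * w ((f^^Suc s) x)) = G x - w x"
      using suminf_split_head[OF sm[OF that]] G_def by simp
    moreover have "(\<Sum>s. g^Suc s * w ((f^^Suc s) x)) = g * G (f x)"
    proof -
      have "(\<lambda>s. g^Suc s * w ((f^^Suc s) x)) = (\<lambda>s. g * (g^s * w ((f^^s) (f x))))"
        by (simp add: funpow_Suc_right mult.assoc del: funpow.simps)
      then show ?thesis using suminf_mult[OF sm, of "f x" g] fm that G_def by simp
    qed
    ultimately show ?thesis by simp
  qed
  have step: "\<bar>G x - G (f x)\<bar> \<le> 2 * W" if "x < n" for x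
  proof -
    have "G x - G (f x) = w x - (1 - g) * G (f x)" using rec[OF that] by (simp add: algebra_simps)
    moreover have "\<bar>(1 - g) * G (f x)\<bar> \<le> W"
    proof -
      have "\<bar>(1 - g) * G (f x)\<bar> = (1 - g) * \<bar>G (f x)\<bar>" using g by (simp add: abs_mult)
      also have "\<dots> \<le> (1 - g) * (W / (1 - g))" using Gb[of "f x"] fm that g by (intro mult_left_mono) auto
      finally show ?thesis using g by simp
    qed
    ultimately show ?thesis using wb that by (smt (verit))
  qed
  have toc: "\<bar>G x - G c0\<bar> \<le> 2 * (real n - 1) * W" if xn: "x < n" for x
  proof -
    obtain k where k: "k < n" "(f^^k) x = c0" using reach xn by blast
    have "\<bar>G x - G ((f^^k) x)\<bar> \<le> real k * (2 * W)" using telescope[OF fm _ xn] step by blast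
    also have "\<dots> \<le> (real n - 1) * (2 * W)" using k W0 by (intro mult_right_mono) auto
    finally show ?thesis using k by (simp add: algebra_simps)
  qed
  have "\<bar>G x - G y\<bar> \<le> 4 * (real n - 1) * W" if "x < n" "y < n" for x y
    using toc[OF that(1)] toc[OF that(2)] by linarith
  then show ?thesis using rec by blast
qed




lemma pigeon_loop:
  fixes n :: nat
  assumes fm: "\<forall>i<n. f i < n" and x: "x < n"
  shows "\<exists>a p. 0 < p \<and> (f^^p) ((f^^a) x) = (f^^a) x"
proof -
  have "\<not> inj_on (\<lambda>t. (f^^t) x) {..n}"
  proof
    assume "inj_on (\<lambda>t. (f^^t) x) {..n}"
    moreover have "(\<lambda>t. (f^^t) x) ` {..n} \<subseteq> {..<n}" using funpow_in[OF fm x] by auto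
    ultimately have "card {..n} \<le> card {..<n}" by (metis card_inj_on_le finite_lessThan)
    then show False by simp
  qed
  then obtain a b where ab: "a \<le> n" "b \<le> n" "a \<noteq> b" "(f^^a) x = (f^^b) x"
    unfolding inj_on_def by auto
  then show ?thesis
  proof (cases "a < b")
    case True
    have "(f^^(b - a)) ((f^^a) x) = (f^^(b - a + a)) x" by (simp only: funpow_add o_apply)
    then have "(f^^(b - a)) ((f^^a) x) = (f^^b) x" using True by simp
    then show ?thesis using ab True by (intro exI[of _ a] exI[of _ "b - a"]) auto
  next
    case False
    then have "b < a" using ab by auto
    have "(f^^(a - b)) ((f^^b) x) = (f^^(a - b + b)) x" by (simp only: funpow_add o_apply)
    then have "(f^^(a - b)) ((f^^b) x) = (f^^a) x" using \<open>b < a\<close> by simp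
    then show ?thesis using ab \<open>b < a\<close> by (intro exI[of _ b] exI[of _ "a - b"]) auto
  qed
qed

lemma loop_cycle:
  assumes fm: "\<forall>i<n. f i < n" and y: "y < n" and p: "0 < p" "(f^^p) y = y"
  shows "\<exists>q. {(f^^t) y | t. t < q} \<in> cycles {(i, f i) | i. i < n}"
proof -
  define q where "q = (LEAST p. 0 < p \<and> (f^^p) y = y)"
  have q: "0 < q" "(f^^q) y = y" using LeastI[of "\<lambda>p. 0 < p \<and> (f^^p) y = y", OF conjI[OF p]] q_def by auto
  have qmin: "\<not> (0 < m \<and> (f^^m) y = y)" if "m < q" for m using not_less_Least[OF that[unfolded q_def]] q_def by auto
  define vs where "vs = map (\<lambda>t. (f^^t) y) [0..<q]"
  have len: "length vs = q" by (simp add: vs_def)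
  have nth: "vs ! t = (f^^t) y" if "t < q" for t using that by (simp add: vs_def)
  have dist: "distinct vs"
  proof (rule ccontr)
    assume "\<not> distinct vs"
    then obtain i j where ij: "i < q" "j < q" "i \<noteq> j" "vs ! i = vs ! j"
      unfolding distinct_conv_nth len by auto
    have key: False if "t1 < t2" "t2 < q" "(f^^t1) y = (f^^t2) y" for t1 t2
    proof -
      have "(f^^(q - t2 + t1)) y = (f^^(q - t2)) ((f^^t1) y)" by (simp add: funpow_add)
      also have "\<dots> = (f^^(q - t2)) ((f^^t2) y)" using that by simp
      also have "\<dots> = (f^^(q - t2 + t2)) y" by (simp only: funpow_add o_apply)
      also have "\<dots> = (f^^q) y" using that by simp
      finally have "(f^^(q - t2 + t1)) y = y" using q by simp
      moreover have "0 < q - t2 + t1" "q - t2 + t1 < q" using that by auto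
      ultimately show False using qmin by blast
    qed
    show False
    proof (cases "i < j")
      case True then show ?thesis using key[of i j] ij nth by auto
    next
      case False then show ?thesis using key[of j i] ij nth by auto
    qed
  qed
  have edges: "(vs ! k, vs ! ((k + 1) mod length vs)) \<in> {(i, f i) | i. i < n}" if "k < length vs" for k
  proof -
    have kq: "k < q" using that len by simp
    have a: "vs ! k = (f^^k) y" using nth kq by simp
    have b: "vs ! ((k + 1) mod length vs) = f ((f^^k) y)"
    proof (cases "k + 1 < q")
      case True then show ?thesis using nth len by simp
    next
      case False
      then have "k + 1 = q" using kq by simp
      then have "(k + 1) mod length vs = 0" using len by simp
      moreover have "f ((f^^k) y) = y" using q \<open>k + 1 = q\<close> by (metis funpow.simps(2) o_apply add.commute plus_1_eq_Suc)
      ultimately show ?thesis using nth q by simp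
    qed
    show ?thesis using a b funpow_in[OF fm y] by auto
  qed
  have "set vs = {(f^^t) y | t. t < q}" by (auto simp: vs_def)
  moreover have "vs \<noteq> []" using len q by auto
  ultimately have "{(f^^t) y | t. t < q} \<in> cycles {(i, f i) | i. i < n}"
    unfolding cycles_def
  proof (intro CollectI exI[of _ vs] conjI)
    show "\<forall>k<length vs. (vs ! k, vs ! ((k + 1) mod length vs)) \<in> {(i, f i) | i. i < n}"
      using edges by blast
  next
    show "{(f^^t) y | t. t < q} = set vs" using \<open>set vs = _\<close> by (rule sym)
  next
    show "vs \<noteq> []" by fact
  next
    show "distinct vs" by (rule dist)
  qed
  then show ?thesis by (rule exI)
qed

lemma min_reach:
  assumes fm: "\<forall>i<n. f i < n" and x: "x < n" and k: "(f^^k) x = c"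
  shows "\<exists>k<n. (f^^k) x = c"
proof -
  define m where "m = (LEAST k. (f^^k) x = c)"
  have m: "(f^^m) x = c" using LeastI[of "\<lambda>k. (f^^k) x = c", OF k] m_def by simp
  have mmin: "(f^^j) x \<noteq> c" if "j < m" for j using not_less_Least[OF that[unfolded m_def]] m_def by simp
  have inj: "inj_on (\<lambda>t. (f^^t) x) {..m}"
  proof (rule inj_onI, rule ccontr)
    fix t1 t2 assume t: "t1 \<in> {..m}" "t2 \<in> {..m}" "(f^^t1) x = (f^^t2) x" "t1 \<noteq> t2"
    have key: False if "a < b" "b \<le> m" "(f^^a) x = (f^^b) x" for a b
    proof -
      have "(f^^(m - b + a)) x = (f^^(m - b)) ((f^^a) x)" by (simp add: funpow_add)
      also have "\<dots> = (f^^(m - b)) ((f^^b) x)" using that by simp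
      also have "\<dots> = (f^^(m - b + b)) x" by (simp only: funpow_add o_apply)
      also have "\<dots> = (f^^m) x" using that by simp
      finally have "(f^^(m - b + a)) x = c" using m by simp
      moreover have "m - b + a < m" using that by linarith
      ultimately show False using mmin by blast
    qed
    show False using t key[of t1 t2] key[of t2 t1] by (cases "t1 < t2") auto
  qed
  have "(\<lambda>t. (f^^t) x) ` {..m} \<subseteq> {..<n}" using funpow_in[OF fm x] by auto
  then have "card {..m} \<le> card {..<n}" using inj by (metis card_inj_on_le finite_lessThan)
  then have "m < n" by simp
  then show ?thesis using m by blast
qed

lemma reach:
  assumes fm: "\<forall>i<n. f i < n" and c: "card (cycles {(i, f i) | i. i < n}) = 1"
  shows "\<exists>c0<n. \<forall>j<n. \<exists>k<n. (f^^k) j = c0"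
proof -
  obtain C where C: "cycles {(i, f i) | i. i < n} = {C}" by (rule card_1_singletonE[OF c])
  then have "C \<in> cycles {(i, f i) | i. i < n}" by simp
  then have "\<exists>vs. C = set vs \<and> vs \<noteq> [] \<and> distinct vs \<and>
     (\<forall>k<length vs. (vs ! k, vs ! ((k + 1) mod length vs)) \<in> {(i, f i) | i. i < n})"
    unfolding cycles_def by (simp only: mem_Collect_eq)
  then obtain vs where vs: "C = set vs" "vs \<noteq> []"
     "\<forall>k<length vs. (vs ! k, vs ! ((k + 1) mod length vs)) \<in> {(i, f i) | i. i < n}"
    by (elim exE conjE) (rule that)
  define c0 where "c0 = vs ! 0"
  have c0C: "c0 \<in> C" using vs c0_def by simp
  have "c0 < n" using vs(3)[rule_format, of 0] vs(2) c0_def by auto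
  moreover have "\<exists>k<n. (f^^k) j = c0" if j: "j < n" for j
  proof -
    obtain a p where ap: "0 < p" "(f^^p) ((f^^a) j) = (f^^a) j" using pigeon_loop[OF fm j] by blast
    obtain q where "{(f^^t) ((f^^a) j) | t. t < q} \<in> cycles {(i, f i) | i. i < n}"
      using loop_cycle[OF fm funpow_in[OF fm j] ap] by blast
    then have "{(f^^t) ((f^^a) j) | t. t < q} = C" unfolding C by (rule singletonD)
    then have "c0 \<in> {(f^^t) ((f^^a) j) | t. t < q}" using c0C by simp
    then obtain t where "(f^^t) ((f^^a) j) = c0" by auto
    then have "(f^^(t + a)) j = c0" by (simp add: funpow_add)
    then show ?thesis using min_reach[OF fm j] by blast
  qed
  ultimately show ?thesis by blast
qed



lemma Max_diff_le:
  fixes F F' :: "nat \<Rightarrow> real"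
  assumes "finite A" "A \<noteq> {}" "\<And>j. j \<in> A \<Longrightarrow> \<bar>F j - F' j\<bar> \<le> c"
  shows "\<bar>Max (F ` A) - Max (F' ` A)\<bar> \<le> c"
proof -
  have h: "Max (G ` A) \<le> Max (G' ` A) + c" if "\<And>j. j \<in> A \<Longrightarrow> \<bar>G j - G' j\<bar> \<le> c" for G G' :: "nat \<Rightarrow> real"
  proof -
    have "Max (G ` A) \<in> G ` A" using assms by (intro Max_in) auto
    then obtain a where a: "a \<in> A" "Max (G ` A) = G a" by auto
    have "G' a \<le> Max (G' ` A)" using a assms by auto
    then show ?thesis using a that[OF a(1)] by linarith
  qed
  have 1: "Max (F ` A) \<le> Max (F' ` A) + c" by (rule h) (rule assms(3))
  have 2: "Max (F' ` A) \<le> Max (F ` A) + c" by (rule h) (use assms(3) in \<open>simp add: abs_minus_commute\<close>)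
  show ?thesis using 1 2 by linarith
qed

lemma Min_diff_le:
  fixes F F' :: "nat \<Rightarrow> real"
  assumes "finite A" "A \<noteq> {}" "\<And>j. j \<in> A \<Longrightarrow> \<bar>F j - F' j\<bar> \<le> c"
  shows "\<bar>Min (F ` A) - Min (F' ` A)\<bar> \<le> c"
proof -
  have h: "Min (G ` A) \<le> Min (G' ` A) + c" if "\<And>j. j \<in> A \<Longrightarrow> \<bar>G j - G' j\<bar> \<le> c" for G G' :: "nat \<Rightarrow> real"
  proof -
    have "Min (G' ` A) \<in> G' ` A" using assms by (intro Min_in) auto
    then obtain a where a: "a \<in> A" "Min (G' ` A) = G' a" by auto
    have "Min (G ` A) \<le> G a" using a assms by auto
    then show ?thesis using a that[OF a(1)] by linarith
  qed
  have 1: "Min (F ` A) \<le> Min (F' ` A) + c" by (rule h) (rule assms(3))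
  have 2: "Min (F' ` A) \<le> Min (F ` A) + c" by (rule h) (use assms(3) in \<open>simp add: abs_minus_commute\<close>)
  show ?thesis using 1 2 by linarith
qed

lemma succs_props:
  assumes "game_graph n E Vmax" "i < n"
  shows "finite (succs E i)" "succs E i \<noteq> {}" "succs E i \<subseteq> {..<n}"
proof -
  have "E \<subseteq> {..<n} \<times> {..<n}" "\<forall>i<n. \<exists>j. (i, j) \<in> E" using assms(1) unfolding game_graph_def by auto
  then show "succs E i \<subseteq> {..<n}" "succs E i \<noteq> {}" using assms(2) unfolding succs_def by auto
  then show "finite (succs E i)" using finite_subset by blast
qed

lemma disc_unique:
  assumes gg: "game_graph n E Vmax" and g: "0 \<le> g" "g < 1"
    and v: "is_disc_value n E Vmax r g v" and v': "is_disc_value n E Vmax r g v'"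
  shows "\<forall>i<n. v i = v' i"
proof (cases "n = 0")
  case True then show ?thesis by simp
next
  case False
  define d where "d = Max ((\<lambda>i. \<bar>v i - v' i\<bar>) ` {..<n})"
  have dge: "\<bar>v i - v' i\<bar> \<le> d" if "i < n" for i using that d_def by auto
  have Vsub: "Vmax \<subseteq> {..<n}" using gg unfolding game_graph_def by auto
  have bnd: "\<bar>v i - v' i\<bar> \<le> g * d" if i: "i < n" for i
  proof -
    note sp = succs_props[OF gg i]
    have el: "\<bar>((1 - g) * r i j + g * v j) - ((1 - g) * r i j + g * v' j)\<bar> \<le> g * d" if "j \<in> succs E i" for j
    proof -
      have "j < n" using sp(3) that by auto
      then have "g * \<bar>v j - v' j\<bar> \<le> g * d" using dge g by (intro mult_left_mono) auto
      moreover have "((1 - g) * r i j + g * v j) - ((1 - g) * r i j + g * v' j) = g * (v j - v' j)"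
        by (simp add: algebra_simps)
      moreover have "\<bar>g * (v j - v' j)\<bar> = g * \<bar>v j - v' j\<bar>" using g by (simp add: abs_mult)
      ultimately show ?thesis by simp
    qed
    show ?thesis
    proof (cases "i \<in> Vmax")
      case True
      then have "v i = Max ((\<lambda>j. (1 - g) * r i j + g * v j) ` succs E i)"
        "v' i = Max ((\<lambda>j. (1 - g) * r i j + g * v' j) ` succs E i)"
        using v v' unfolding is_disc_value_def by auto
      then show ?thesis using Max_diff_le[OF sp(1,2) el] by (simp only:)
    next
      case False
      then have "i \<in> Vmin n Vmax" using i by (simp add: Vmin_def)
      then have "v i = Min ((\<lambda>j. (1 - g) * r i j + g * v j) ` succs E i)"
        "v' i = Min ((\<lambda>j. (1 - g) * r i j + g * v' j) ` succs E i)"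
        using v v' unfolding is_disc_value_def by auto
      then show ?thesis using Min_diff_le[OF sp(1,2) el] by (simp only:)
    qed
  qed
  have "d \<in> (\<lambda>i. \<bar>v i - v' i\<bar>) ` {..<n}" unfolding d_def using False by (intro Max_in) auto
  then obtain i0 where i0: "i0 < n" "d = \<bar>v i0 - v' i0\<bar>" by auto
  have "d \<le> g * d" using bnd[OF i0(1)] i0 by simp
  moreover have "0 \<le> d" using i0 by simp
  ultimately have "(1 - g) * d \<le> 0" "0 < 1 - g" using g by (auto simp: algebra_simps)
  then have "d \<le> 0" by (simp add: mult_le_0_iff)
  then have "d = 0" using \<open>0 \<le> d\<close> by simp
  then show ?thesis using dge by fastforce
qed



lemma same_pair_opt:
  assumes "same_pair n Vmax \<sigma> \<tau> \<sigma>' \<tau>'" "disc_optimal n E Vmax r g \<sigma> \<tau>"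
  shows "disc_optimal n E Vmax r g \<sigma>' \<tau>'"
  using assms unfolding disc_optimal_def is_policy_pair_def same_pair_def by auto

lemma bp_mono:
  assumes "blackwell_prop n E Vmax r g0" "g0 \<le> g'"
  shows "blackwell_prop n E Vmax r g'"
  using assms unfolding blackwell_prop_def by (meson le_less_trans)

theorem mainTheorem17:
  fixes n :: nat and E :: "(nat \<times> nat) set" and Vmax :: "nat set"
    and r :: "nat \<Rightarrow> nat \<Rightarrow> real" and \<sigma> \<tau> :: "nat \<Rightarrow> nat"
    and lam :: real and u :: "nat \<Rightarrow> real" and \<gamma> :: real
  assumes "game_graph n E Vmax"
    and "ergodic_graph n E Vmax"
    and "Xi n E Vmax \<sigma> \<tau>"
    and "r \<in> P_set n E Vmax \<sigma> \<tau>"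
    and "solves_ergodic n E Vmax r lam u"
    and "1 - 1 / (6 * real n ^ 2 * cond_num E r lam u) < \<gamma>" and "\<gamma> < 1"
  shows "disc_optimal n E Vmax r \<gamma> \<sigma> \<tau>
       \<and> (\<forall>\<sigma>' \<tau>'. disc_optimal n E Vmax r \<gamma> \<sigma>' \<tau>' \<longrightarrow> same_pair n Vmax \<sigma> \<tau> \<sigma>' \<tau>')
       \<and> blackwell_prop n E Vmax r (1 - 1 / (6 * real n ^ 2 * cond_num E r lam u))
       \<and> (\<forall>g. is_blackwell_threshold n E Vmax r g \<longrightarrow> g \<le> 1 - 1 / (6 * real n ^ 2 * cond_num E r lam u))"
proof -
  note gg = assms(1)
  have Esub: "E \<subseteq> {..<n} \<times> {..<n}" and Vsub: "Vmax \<subseteq> {..<n}"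
    using gg unfolding game_graph_def by auto
  have Vmin_eq: "Vmin n Vmax = {..<n} - Vmax" by (simp add: Vmin_def)
  have pol: "is_policy_pair n E Vmax \<sigma> \<tau>" using assms(3) unfolding Xi_def by auto
  define f where "f i = (if i \<in> Vmax then \<sigma> i else \<tau> i)" for i
  have fE: "(i, f i) \<in> E" if "i < n" for i
    using pol that unfolding is_policy_pair_def f_def Vmin_eq by auto
  have fm: "\<forall>i<n. f i < n" using fE Esub by blast
  have pe: "policy_edges n Vmax \<sigma> \<tau> = {(i, f i) | i. i < n}"
    unfolding policy_edges_def f_def Vmin_eq using Vsub by auto
  have cyc: "card (cycles {(i, f i) | i. i < n}) = 1" using assms(3) pe unfolding Xi_def by simp
  obtain c0 where c0: "c0 < n" "\<forall>j<n. \<exists>k<n. (f^^k) j = c0" using reach[OF fm cyc] by blast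
  have n1: "1 \<le> real n" using c0 by simp
  have inE: "(i, j) \<in> E \<Longrightarrow> i < n \<and> j < n" for i j using Esub by auto
  have succ_iff: "j \<in> succs E i \<longleftrightarrow> (i, j) \<in> E" for i j by (simp add: succs_def)
  define tight where "tight i j \<longleftrightarrow> lam + u i = r i j + u j" for i j
  have ergmax: "lam + u i = Max ((\<lambda>j. r i j + u j) ` succs E i)" if "i \<in> Vmax" for i
    using assms(5) that unfolding solves_ergodic_def by auto
  have ergmin: "lam + u i = Min ((\<lambda>j. r i j + u j) ` succs E i)" if "i \<in> Vmin n Vmax" for i
    using assms(5) that unfolding solves_ergodic_def by auto
  have maxle: "r i j + u j \<le> lam + u i" if "i \<in> Vmax" "(i, j) \<in> E" for i j
  proof -
    have i: "i < n" using that inE by auto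
    show ?thesis unfolding ergmax[OF that(1)]
      using succs_props[OF gg i] that(2) succ_iff by (intro Max_ge) auto
  qed
  have minge: "lam + u i \<le> r i j + u j" if "i \<in> Vmin n Vmax" "(i, j) \<in> E" for i j
  proof -
    have i: "i < n" using that inE by auto
    show ?thesis unfolding ergmin[OF that(1)]
      using succs_props[OF gg i] that(2) succ_iff by (intro Min_le) auto
  qed
  have extight: "\<exists>j. (i, j) \<in> E \<and> tight i j" if i: "i < n" for i
  proof (cases "i \<in> Vmax")
    case True
    have "Max ((\<lambda>j. r i j + u j) ` succs E i) \<in> (\<lambda>j. r i j + u j) ` succs E i"
      using succs_props[OF gg i] by (intro Max_in) auto
    then show ?thesis using ergmax[OF True] unfolding tight_def by (auto simp: succs_def)
  next
    case False
    then have F: "i \<in> Vmin n Vmax" using i Vmin_eq by auto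
    have "Min ((\<lambda>j. r i j + u j) ` succs E i) \<in> (\<lambda>j. r i j + u j) ` succs E i"
      using succs_props[OF gg i] by (intro Min_in) auto
    then show ?thesis using ergmin[OF F] unfolding tight_def by (auto simp: succs_def)
  qed
  have uniq: "j = f i" if i: "i < n" and ij: "(i, j) \<in> E" and t: "tight i j" for i j
  proof -
    define ch where "ch k = (if k = i then j else (SOME j'. (k, j') \<in> E \<and> tight k j'))" for k
    have chE: "(k, ch k) \<in> E \<and> tight k (ch k)" if "k < n" for k
      using someI_ex[OF extight[OF that]] ij t unfolding ch_def by auto
    have "bias_induced n E Vmax r ch ch"
      unfolding bias_induced_def is_policy_pair_def
    proof (intro conjI exI)
      show "\<forall>k\<in>Vmax. (k, ch k) \<in> E" "\<forall>k\<in>Vmin n Vmax. (k, ch k) \<in> E"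
        using chE Vsub Vmin_eq by auto
      show "solves_ergodic n E Vmax r lam u" by (rule assms(5))
      show "\<forall>k\<in>Vmax. lam + u k = r k (ch k) + u (ch k)"
        "\<forall>k\<in>Vmin n Vmax. lam + u k = r k (ch k) + u (ch k)"
        using chE Vsub Vmin_eq unfolding tight_def by auto
    qed
    then have "same_pair n Vmax \<sigma> \<tau> ch ch" using assms(4) unfolding P_set_def by auto
    then have sp: "\<forall>k\<in>Vmax. ch k = \<sigma> k" "\<forall>k\<in>Vmin n Vmax. ch k = \<tau> k"
      unfolding same_pair_def by auto
    have chi: "ch i = j" by (simp add: ch_def)
    show ?thesis
    proof (cases "i \<in> Vmax")
      case True then show ?thesis using sp(1) chi unfolding f_def by auto
    next
      case False
      then have "i \<in> Vmin n Vmax" using i Vmin_eq by auto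
      then show ?thesis using sp(2) chi False unfolding f_def by auto
    qed
  qed
  have tf: "tight i (f i)" if i: "i < n" for i
    using extight[OF i] uniq[OF i] by blast
  define M where "M = Max {\<bar>r i j - lam\<bar> | i j. (i, j) \<in> E}"
  define D where "D = {\<bar>r i j - lam + u j - u i\<bar> | i j. (i, j) \<in> E \<and> r i j - lam + u j - u i \<noteq> 0}"
  have cn: "cond_num E r lam u = (if D = {} then 1 else M / Min D)"
    unfolding cond_num_def D_def M_def Let_def by simp
  have finE: "finite E" using Esub finite_subset by blast
  have Mset: "{\<bar>r i j - lam\<bar> | i j. (i, j) \<in> E} = (\<lambda>(i, j). \<bar>r i j - lam\<bar>) ` E" by auto
  have Mle: "\<bar>r i j - lam\<bar> \<le> M" if "(i, j) \<in> E" for i j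
    unfolding M_def Mset using finE that by (intro Max_ge) auto
  have finD: "finite D"
  proof -
    have "D \<subseteq> (\<lambda>(i, j). \<bar>r i j - lam + u j - u i\<bar>) ` E" unfolding D_def by auto
    then show ?thesis using finE finite_subset by blast
  qed
  have Dge: "Min D \<le> \<bar>r i j - lam + u j - u i\<bar>" if "(i, j) \<in> E" "r i j - lam + u j - u i \<noteq> 0" for i j
    using finD that unfolding D_def by (intro Min_le) auto
  have M0: "0 \<le> M" using Mle[OF fE[OF c0(1)]] by linarith
  define w where "w x = u x - u c0" for x
  have ustep: "\<forall>x<n. \<bar>u x - u (f x)\<bar> \<le> M"
  proof (intro allI impI)
    fix x assume x: "x < n"
    have "u x - u (f x) = r x (f x) - lam" using tf[OF x] unfolding tight_def by linarith
    then show "\<bar>u x - u (f x)\<bar> \<le> M" using Mle[OF fE[OF x]] by simp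
  qed
  have wb: "\<forall>x<n. \<bar>w x\<bar> \<le> (real n - 1) * M"
  proof (intro allI impI)
    fix x assume x: "x < n"
    obtain k where k: "k < n" "(f^^k) x = c0" using c0 x by blast
    have "\<bar>u x - u ((f^^k) x)\<bar> \<le> real k * M" by (rule telescope[OF fm ustep x])
    also have "\<dots> \<le> (real n - 1) * M" using k M0 by (intro mult_right_mono) auto
    finally show "\<bar>w x\<bar> \<le> (real n - 1) * M" using k unfolding w_def by simp
  qed
  define g0 where "g0 = 1 - 1 / (6 * real n ^ 2 * cond_num E r lam u)"
  have key: "disc_optimal n E Vmax r g \<sigma> \<tau> \<and>
      (\<forall>\<sigma>' \<tau>'. disc_optimal n E Vmax r g \<sigma>' \<tau>' \<longrightarrow> same_pair n Vmax \<sigma> \<tau> \<sigma>' \<tau>')"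
    if g: "g0 < g" "g < 1" for g
  proof -
    have pre: "0 \<le> g \<and> (D \<noteq> {} \<longrightarrow> (1 - g) * (4 * (real n - 1) * ((real n - 1) * M)) < Min D)"
    proof (cases "D = {}")
      case True
      then have "g0 = 1 - 1 / (6 * real n ^ 2)" using cn g0_def by simp
      moreover have "1 \<le> 6 * real n ^ 2" using n1 mult_mono[of 1 "real n" 1 "real n"] by (simp add: power2_eq_square)
      moreover have "1 / (6 * real n ^ 2) \<le> 1" using calculation(2) by (auto simp add: divide_le_eq_1)
      ultimately have "0 \<le> g0" by simp
      then show ?thesis using True g by simp
    next
      case False
      define N where "N = real n"
      have N1: "1 \<le> N" using n1 N_def by simp
      have NN: "N \<le> N * N" using N1 by (simp add: mult_le_cancel_left1)
      have dpos: "0 < Min D"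
      proof -
        have "Min D \<in> D" using finD False by (intro Min_in) auto
        then show ?thesis unfolding D_def by auto
      qed
      have "Min D \<in> D" using finD False by (intro Min_in) auto
      then obtain i0 j0 where ij0: "(i0, j0) \<in> E" "Min D = \<bar>r i0 j0 - lam + u j0 - u i0\<bar>"
        unfolding D_def by auto
      have "i0 < n" "j0 < n" using inE[OF ij0(1)] by auto
      then have "\<bar>w i0\<bar> \<le> (N - 1) * M" "\<bar>w j0\<bar> \<le> (N - 1) * M" using wb N_def by auto
      moreover have "r i0 j0 - lam + u j0 - u i0 = (r i0 j0 - lam) + w j0 - w i0" unfolding w_def by simp
      ultimately have dle: "Min D \<le> (2 * N - 1) * M" using ij0(2) Mle[OF ij0(1)]
        by (simp add: algebra_simps)
      have Mpos: "0 < M"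
      proof (rule ccontr)
        assume "\<not> 0 < M"
        then have "M = 0" using M0 by simp
        then show False using dle dpos by simp
      qed
      define K where "K = 6 * N * N * M"
      have Kpos: "0 < K" using Mpos N1 K_def by simp
      have cnv: "cond_num E r lam u = M / Min D" using cn False by simp
      have "1 / (6 * real n ^ 2 * cond_num E r lam u) = Min D / K"
        unfolding cnv K_def N_def using dpos Mpos by (simp add: power2_eq_square field_simps)
      then have "1 - g < Min D / K" using g g0_def by simp
      then have lt: "(1 - g) * K < Min D" using Kpos by (simp add: pos_less_divide_eq)
      have h6: "2 * N - 1 < 6 * (N * N)" using NN N1 by linarith
      have "(2 * N - 1) * M < (6 * (N * N)) * M" using h6 Mpos by (rule mult_strict_right_mono)
      then have "(2 * N - 1) * M < K" unfolding K_def by (simp add: mult.assoc)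
      then have "(1 - g) * K < K" using lt dle by linarith
      then have "0 \<le> g" using Kpos by (smt (verit) mult_less_cancel_right2)
      moreover have "(1 - g) * (4 * (N - 1) * ((N - 1) * M)) \<le> (1 - g) * K"
      proof (intro mult_left_mono)
        have "4 * (N - 1) * ((N - 1) * M) = (4 * (N - 1) * (N - 1)) * M" by simp
        also have "\<dots> \<le> (6 * N * N) * M"
        proof (rule mult_right_mono)
          have "4 * (N - 1) * (N - 1) = 4 * (N * N) - 8 * N + 4" by (simp add: algebra_simps)
          moreover have "6 * N * N = 6 * (N * N)" by simp
          ultimately show "4 * (N - 1) * (N - 1) \<le> 6 * N * N" using NN N1 by linarith
        qed (use Mpos in simp)
        finally show "4 * (N - 1) * ((N - 1) * M) \<le> K" unfolding K_def by simp
      qed (use g in simp)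
      ultimately show ?thesis using lt N_def by auto
    qed
    then have g0': "0 \<le> g" by simp
    obtain G where G: "\<forall>x<n. G x = w x + g * G (f x)"
        "\<forall>x<n. \<forall>y<n. \<bar>G x - G y\<bar> \<le> 4 * (real n - 1) * ((real n - 1) * M)"
      using core[OF fm c0 wb g0' g(2)] by blast
    define V where "V i = lam + (1 - g) * w i - (1 - g)^2 * G (f i)" for i
    have tw: "r i (f i) = lam + w i - w (f i)" if "i < n" for i
      using tf[OF that] unfolding tight_def w_def by simp
    have Vrec: "V i = (1 - g) * r i (f i) + g * V (f i)" if i: "i < n" for i
    proof -
      have fi: "f i < n" using fm i by simp
      have Gfi: "G (f i) = w (f i) + g * G (f (f i))" using G(1) fi by simp
      show ?thesis unfolding V_def tw[OF i] Gfi by (simp add: power2_eq_square algebra_simps)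
    qed
    have Vdiff: "V i - ((1 - g) * r i j + g * V j) =
        (1 - g) * ((1 - g) * (G j - G (f i)) - (r i j - lam + u j - u i))"
      if i: "i < n" and ij: "(i, j) \<in> E" for i j
    proof -
      have j: "j < n" using inE[OF ij] by simp
      have Gj: "G j = w j + g * G (f j)" using G(1) j by simp
      show ?thesis unfolding V_def Gj w_def by (simp add: power2_eq_square algebra_simps)
    qed
    have osc: "(1 - g) * \<bar>G j - G (f i)\<bar> < Min D" if "D \<noteq> {}" "i < n" "j < n" for i j
    proof -
      have "(1 - g) * \<bar>G j - G (f i)\<bar> \<le> (1 - g) * (4 * (real n - 1) * ((real n - 1) * M))"
        using G(2) fm that g by (intro mult_left_mono) auto
      then show ?thesis using pre that by linarith
    qed
    have rho: "r i j - lam + u j - u i \<noteq> 0" "D \<noteq> {}"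
      "Min D \<le> \<bar>r i j - lam + u j - u i\<bar>"
      if i: "i < n" and ij: "(i, j) \<in> E" and ne: "j \<noteq> f i" for i j
    proof -
      show nz: "r i j - lam + u j - u i \<noteq> 0"
      proof
        assume "r i j - lam + u j - u i = 0"
        then have "tight i j" unfolding tight_def by simp
        then show False using uniq[OF i ij] ne by simp
      qed
      show "D \<noteq> {}" unfolding D_def using ij nz by blast
      show "Min D \<le> \<bar>r i j - lam + u j - u i\<bar>" by (rule Dge[OF ij nz])
    qed
    have strict_max: "(1 - g) * r i j + g * V j < V i"
      if i: "i \<in> Vmax" and ij: "(i, j) \<in> E" and ne: "j \<noteq> f i" for i j
    proof -
      have iN: "i < n" and jN: "j < n" using inE[OF ij] by auto
      note rh = rho[OF iN ij ne]
      have "r i j + u j \<le> lam + u i" by (rule maxle[OF i ij])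
      then have "Min D \<le> - (r i j - lam + u j - u i)" using rh(3) by simp
      moreover have "(1 - g) * \<bar>G j - G (f i)\<bar> < Min D" by (rule osc[OF rh(2) iN jN])
      moreover have "- ((1 - g) * \<bar>G j - G (f i)\<bar>) \<le> (1 - g) * (G j - G (f i))"
      proof -
        have "(1 - g) * (- \<bar>G j - G (f i)\<bar>) \<le> (1 - g) * (G j - G (f i))"
          using g by (intro mult_left_mono) auto
        then show ?thesis by simp
      qed
      ultimately have "0 < (1 - g) * (G j - G (f i)) - (r i j - lam + u j - u i)" by linarith
      then have "0 < (1 - g) * ((1 - g) * (G j - G (f i)) - (r i j - lam + u j - u i))"
        using g by simp
      then show ?thesis using Vdiff[OF iN ij] by simp
    qed
    have strict_min: "V i < (1 - g) * r i j + g * V j"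
      if i: "i \<in> Vmin n Vmax" and ij: "(i, j) \<in> E" and ne: "j \<noteq> f i" for i j
    proof -
      have iN: "i < n" and jN: "j < n" using inE[OF ij] by auto
      note rh = rho[OF iN ij ne]
      have "lam + u i \<le> r i j + u j" by (rule minge[OF i ij])
      then have "Min D \<le> r i j - lam + u j - u i" using rh(3) by simp
      moreover have "(1 - g) * \<bar>G j - G (f i)\<bar> < Min D" by (rule osc[OF rh(2) iN jN])
      moreover have "(1 - g) * (G j - G (f i)) \<le> (1 - g) * \<bar>G j - G (f i)\<bar>"
        using g by (intro mult_left_mono) auto
      ultimately have "(1 - g) * (G j - G (f i)) - (r i j - lam + u j - u i) < 0" by linarith
      then have "(1 - g) * ((1 - g) * (G j - G (f i)) - (r i j - lam + u j - u i)) < 0"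
        using g by (simp add: mult_pos_neg)
      then show ?thesis using Vdiff[OF iN ij] by simp
    qed
    have val: "is_disc_value n E Vmax r g V"
      unfolding is_disc_value_def
    proof (intro conjI ballI)
      fix i assume i: "i \<in> Vmax"
      then have iN: "i < n" using Vsub by auto
      note sp = succs_props[OF gg iN]
      show "V i = Max ((\<lambda>j. (1 - g) * r i j + g * V j) ` succs E i)"
      proof (rule sym, rule Max_eqI)
        show "finite ((\<lambda>j. (1 - g) * r i j + g * V j) ` succs E i)" using sp by simp
        show "V i \<in> (\<lambda>j. (1 - g) * r i j + g * V j) ` succs E i"
          using Vrec[OF iN] fE[OF iN] succ_iff by auto
        fix y assume "y \<in> (\<lambda>j. (1 - g) * r i j + g * V j) ` succs E i"
        then obtain j where j: "(i, j) \<in> E" "y = (1 - g) * r i j + g * V j" using succ_iff by auto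
        show "y \<le> V i"
        proof (cases "j = f i")
          case True then show ?thesis using j Vrec[OF iN] by simp
        next
          case False then show ?thesis using j strict_max[OF i j(1)] by simp
        qed
      qed
    next
      fix i assume i: "i \<in> Vmin n Vmax"
      then have iN: "i < n" using Vmin_eq by auto
      note sp = succs_props[OF gg iN]
      show "V i = Min ((\<lambda>j. (1 - g) * r i j + g * V j) ` succs E i)"
      proof (rule sym, rule Min_eqI)
        show "finite ((\<lambda>j. (1 - g) * r i j + g * V j) ` succs E i)" using sp by simp
        show "V i \<in> (\<lambda>j. (1 - g) * r i j + g * V j) ` succs E i"
          using Vrec[OF iN] fE[OF iN] succ_iff by auto
        fix y assume "y \<in> (\<lambda>j. (1 - g) * r i j + g * V j) ` succs E i"
        then obtain j where j: "(i, j) \<in> E" "y = (1 - g) * r i j + g * V j" using succ_iff by auto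
        show "V i \<le> y"
        proof (cases "j = f i")
          case True then show ?thesis using j Vrec[OF iN] by simp
        next
          case False then show ?thesis using j strict_min[OF i j(1)] by simp
        qed
      qed
    qed
    have opt: "disc_optimal n E Vmax r g \<sigma> \<tau>"
      unfolding disc_optimal_def
    proof (intro conjI exI)
      show "is_policy_pair n E Vmax \<sigma> \<tau>" by (rule pol)
      show "is_disc_value n E Vmax r g V" by (rule val)
      show "\<forall>i\<in>Vmax. V i = (1 - g) * r i (\<sigma> i) + g * V (\<sigma> i)"
        using Vrec Vsub unfolding f_def by auto
      show "\<forall>i\<in>Vmin n Vmax. V i = (1 - g) * r i (\<tau> i) + g * V (\<tau> i)"
        using Vrec Vmin_eq unfolding f_def by auto
    qed
    have uq: "same_pair n Vmax \<sigma> \<tau> \<sigma>' \<tau>'" if o': "disc_optimal n E Vmax r g \<sigma>' \<tau>'" for \<sigma>' \<tau>'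
    proof -
      obtain v where pol': "is_policy_pair n E Vmax \<sigma>' \<tau>'" and v: "is_disc_value n E Vmax r g v"
        and vmax: "\<forall>i\<in>Vmax. v i = (1 - g) * r i (\<sigma>' i) + g * v (\<sigma>' i)"
        and vmin: "\<forall>i\<in>Vmin n Vmax. v i = (1 - g) * r i (\<tau>' i) + g * v (\<tau>' i)"
        using o' unfolding disc_optimal_def by blast
      have vV: "\<forall>i<n. v i = V i" by (rule disc_unique[OF gg g0' g(2) v val])
      have A: "\<sigma>' i = \<sigma> i" if i: "i \<in> Vmax" for i
      proof (rule ccontr)
        assume ne: "\<sigma>' i \<noteq> \<sigma> i"
        have iN: "i < n" using i Vsub by auto
        have ij: "(i, \<sigma>' i) \<in> E" using pol' i unfolding is_policy_pair_def by auto
        have jN: "\<sigma>' i < n" using inE[OF ij] by simp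
        have "V i = (1 - g) * r i (\<sigma>' i) + g * V (\<sigma>' i)" using vmax i vV iN jN by auto
        moreover have "(1 - g) * r i (\<sigma>' i) + g * V (\<sigma>' i) < V i"
          using strict_max[OF i ij] ne i unfolding f_def by auto
        ultimately show False by simp
      qed
      have B: "\<tau>' i = \<tau> i" if i: "i \<in> Vmin n Vmax" for i
      proof (rule ccontr)
        assume ne: "\<tau>' i \<noteq> \<tau> i"
        have iN: "i < n" and nV: "i \<notin> Vmax" using i Vmin_eq by auto
        have ij: "(i, \<tau>' i) \<in> E" using pol' i unfolding is_policy_pair_def by auto
        have jN: "\<tau>' i < n" using inE[OF ij] by simp
        have "V i = (1 - g) * r i (\<tau>' i) + g * V (\<tau>' i)" using vmin i vV iN jN by auto
        moreover have "V i < (1 - g) * r i (\<tau>' i) + g * V (\<tau>' i)"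
          using strict_min[OF i ij] ne nV unfolding f_def by auto
        ultimately show False by simp
      qed
      show ?thesis unfolding same_pair_def using A B by auto
    qed
    show ?thesis using opt uq by blast
  qed
  have bp: "blackwell_prop n E Vmax r g0"
    unfolding blackwell_prop_def
  proof (intro allI impI)
    fix \<sigma>' \<tau>' g2
    assume "\<exists>g. g0 < g \<and> g < 1 \<and> disc_optimal n E Vmax r g \<sigma>' \<tau>'"
    then obtain g1 where g1: "g0 < g1" "g1 < 1" "disc_optimal n E Vmax r g1 \<sigma>' \<tau>'" by blast
    have sp: "same_pair n Vmax \<sigma> \<tau> \<sigma>' \<tau>'" using key[OF g1(1,2)] g1(3) by blast
    assume g2: "g0 < g2 \<and> g2 < 1"
    show "disc_optimal n E Vmax r g2 \<sigma>' \<tau>'"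
      using same_pair_opt[OF sp] key g2 by blast
  qed
  have thr: "g \<le> g0" if t: "is_blackwell_threshold n E Vmax r g" for g
  proof (cases "0 < g0")
    case True
    have "g0 < 1" using assms(6,7) unfolding g0_def by linarith
    then show ?thesis using t True bp unfolding is_blackwell_threshold_def by blast
  next
    case False
    have g: "0 < g" "g < 1" using t unfolding is_blackwell_threshold_def by auto
    have "blackwell_prop n E Vmax r (g / 2)" using bp_mono[OF bp] False g by simp
    moreover have "0 < g / 2" "g / 2 < 1" using g by auto
    ultimately have "g \<le> g / 2" using t unfolding is_blackwell_threshold_def by blast
    then show ?thesis using g by simp
  qed
  show ?thesis using key[OF _ assms(7)] assms(6) bp thr unfolding g0_def by blast
qed

end
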